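(* Fix an agent $i\in\mathit{Agt}$. For each operator $O\in\{\mathcal{A}_i,\mathcal{R}_i,\mathcal{A}^{\mathsf{real}}_i,\mathcal{R}^{\mathsf{real}}_i\}$ the operator $O$ is not expressible by means of the other modalities of $\mathcal{L}$ (including each other): there exist an atom $p\in\mathit{Atm}$ such that no formula $\varphi\in\mathcal{L}$ in which no operator of the same kind as $O$ occurs (i.e. no $\mathcal{A}_j$ if $O=\mathcal{A}_i$, no $\mathcal{R}_j$ if $O=\mathcal{R}_i$, no $\mathcal{A}^{\mathsf{real}}_j$ if $O=\mathcal{A}^{\mathsf{real}}_i$, no $\mathcal{R}^{\mathsf{real}}_j$ if $O=\mathcal{R}^{\mathsf{real}}_i$, for any agent $j$) satisfies $\models O\,p\leftrightarrow\varphi$.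
   Context: Let $\mathit{Agt}=\{1,\dots,n\}$ be a finite set of agents and $\mathit{Atm}$ a countably infinite set of atoms containing, for each $i\in\mathit{Agt}$, special atoms $\mathsf{rew}_i$ ("$i$ gets a reward") and $\mathsf{pun}_i$ ("$i$ gets a punishment"). The language $\mathcal{L}_0$ is given by $\alpha::=p\mid\neg\alpha\mid\alpha\wedge\alpha\mid \triangle_i\alpha$ ($p\in\mathit{Atm}$, $i\in\mathit{Agt}$; $\triangle_i\alpha$ = "$i$ explicitly believes $\alpha$"); $\to,\vee,\leftrightarrow,\top,\bot$ are the usual abbreviations. A state is a tuple $S=((B_i)_{i\in\mathit{Agt}},V)$ with $B_i\subseteq\mathcal{L}_0$ (belief base) and $V\subseteq\mathit{Atm}$; $\mathbf{S}$ is the set of all states. Truth of $\mathcal{L}_0$-formulas: $S\models p$ iff $p\in V$; Boolean clauses as usual; $S\models\triangle_i\alpha$ iff $\alpha\in B_i$. Define $\mathit{Des}_i(S)=\{\alpha\in\mathcal{L}_0:(\alpha\to\mathsf{rew}_i)\in B_i\}$ and $\mathit{Und}_i(S)=\{\alpha\in\mathcal{L}_0:(\alpha\to\mathsf{pun}_i)\in B_i\}$. Relations on $\mathbf{S}$: $S\,\mathcal{E}_i\,S'$ iff $S'\models\alpha$ for all $\alpha\in B_i$ (where $B_i$ is $i$'s base in $S$); $S\,\mathcal{A}_i\,S'$ iff $S'\models\alpha$ for some $\alpha\in\mathit{Des}_i(S)$; $S\,\mathcal{R}_i\,S'$ iff $S'\models\alpha$ for some $\alpha\in\mathit{Und}_i(S)$.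 A model is a pair $(S,U)$ with $S\in U\subseteq\mathbf{S}$. The language $\mathcal{L}$ is $\varphi::=\alpha\mid\neg\varphi\mid\varphi\wedge\varphi\mid\Box_i\varphi\mid\mathcal{A}_i\varphi\mid\mathcal{R}_i\varphi\mid\mathcal{A}^{\mathsf{real}}_i\varphi\mid\mathcal{R}^{\mathsf{real}}_i\varphi$ with $\alpha\in\mathcal{L}_0$. Semantics: $(S,U)\models\alpha$ iff $S\models\alpha$; Boolean clauses as usual; $(S,U)\models\Box_i\varphi$ iff for all $S'\in U$ with $S\mathcal{E}_iS'$, $(S',U)\models\varphi$; $(S,U)\models\mathcal{A}_i\varphi$ iff for all $S'\in U$ with $(S',U)\models\varphi$, $S\mathcal{A}_iS'$; $(S,U)\models\mathcal{R}_i\varphi$ iff for all $S'\in U$ with $(S',U)\models\varphi$, $S\mathcal{R}_iS'$; $(S,U)\models\mathcal{A}^{\mathsf{real}}_i\varphi$ iff for all $S'\in U$ with $(S',U)\models\varphi$ and $S\mathcal{E}_iS'$, $S\mathcal{A}_iS'$; $(S,U)\models\mathcal{R}^{\mathsf{real}}_i\varphi$ iff for all $S'\in U$ with $(S',U)\models\varphi$ and $S\mathcal{E}_iS'$, $S\mathcal{R}_iS'$. A formula is valid ($\models\varphi$) if it is true in every model $(S,U)$. *)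

theory Defs
  imports Main
begin

text \<open>Agents: a finite (nonempty) type 'a, playing the role of Agt = {1,...,n}.
Atoms: a countably infinite set containing rew_i and pun_i for every agent i.\<close>

datatype 'a atm = Rew 'a | Pun 'a | Prop nat

datatype 'a fm0 = Atom "'a atm" | Neg0 "'a fm0" | Conj0 "'a fm0" "'a fm0" | Bel 'a "'a fm0"

definition Imp0 :: "'a fm0 \<Rightarrow> 'a fm0 \<Rightarrow> 'a fm0" where
  "Imp0 a b = Neg0 (Conj0 a (Neg0 b))"

text \<open>States: belief bases for each agent, and a valuation.\<close>
type_synonym 'a state = "('a \<Rightarrow> 'a fm0 set) \<times> 'a atm set"

fun sat0 :: "'a state \<Rightarrow> 'a fm0 \<Rightarrow> bool" where
  "sat0 S (Atom p) = (p \<in> snd S)"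
| "sat0 S (Neg0 a) = (\<not> sat0 S a)"
| "sat0 S (Conj0 a b) = (sat0 S a \<and> sat0 S b)"
| "sat0 S (Bel i a) = (a \<in> fst S i)"

definition Des :: "'a \<Rightarrow> 'a state \<Rightarrow> 'a fm0 set" where
  "Des i S = {a. Imp0 a (Atom (Rew i)) \<in> fst S i}"

definition Und :: "'a \<Rightarrow> 'a state \<Rightarrow> 'a fm0 set" where
  "Und i S = {a. Imp0 a (Atom (Pun i)) \<in> fst S i}"

definition relE :: "'a \<Rightarrow> 'a state \<Rightarrow> 'a state \<Rightarrow> bool" where
  "relE i S S' = (\<forall>a \<in> fst S i. sat0 S' a)"

definition relA :: "'a \<Rightarrow> 'a state \<Rightarrow> 'a state \<Rightarrow> bool" where
  "relA i S S' = (\<exists>a \<in> Des i S. sat0 S' a)"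

definition relR :: "'a \<Rightarrow> 'a state \<Rightarrow> 'a state \<Rightarrow> bool" where
  "relR i S S' = (\<exists>a \<in> Und i S. sat0 S' a)"

datatype 'a fm =
    Base "'a fm0"
  | Neg "'a fm"
  | Conj "'a fm" "'a fm"
  | Box 'a "'a fm"
  | Att 'a "'a fm"
  | Rep 'a "'a fm"
  | AttR 'a "'a fm"
  | RepR 'a "'a fm"

definition Imp :: "'a fm \<Rightarrow> 'a fm \<Rightarrow> 'a fm" where
  "Imp a b = Neg (Conj a (Neg b))"

definition Iff :: "'a fm \<Rightarrow> 'a fm \<Rightarrow> 'a fm" where
  "Iff a b = Conj (Imp a b) (Imp b a)"

text \<open>Truth in a model (S,U); U is the universe of states.\<close>
fun sat :: "'a state set \<Rightarrow> 'a state \<Rightarrow> 'a fm \<Rightarrow> bool" where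
  "sat U S (Base a) = sat0 S a"
| "sat U S (Neg f) = (\<not> sat U S f)"
| "sat U S (Conj f g) = (sat U S f \<and> sat U S g)"
| "sat U S (Box i f) = (\<forall>S'\<in>U. relE i S S' \<longrightarrow> sat U S' f)"
| "sat U S (Att i f) = (\<forall>S'\<in>U. sat U S' f \<longrightarrow> relA i S S')"
| "sat U S (Rep i f) = (\<forall>S'\<in>U. sat U S' f \<longrightarrow> relR i S S')"
| "sat U S (AttR i f) = (\<forall>S'\<in>U. sat U S' f \<and> relE i S S' \<longrightarrow> relA i S S')"
| "sat U S (RepR i f) = (\<forall>S'\<in>U. sat U S' f \<and> relE i S S' \<longrightarrow> relR i S S')"

definition valid :: "'a fm \<Rightarrow> bool" where
  "valid f = (\<forall>U S. S \<in> U \<longrightarrow> sat U S f)"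

datatype kind = KAtt | KRep | KAttR | KRepR

fun mk_op :: "kind \<Rightarrow> 'a \<Rightarrow> 'a fm \<Rightarrow> 'a fm" where
  "mk_op KAtt i f = Att i f"
| "mk_op KRep i f = Rep i f"
| "mk_op KAttR i f = AttR i f"
| "mk_op KRepR i f = RepR i f"

fun occurs :: "kind \<Rightarrow> 'a fm \<Rightarrow> bool" where
  "occurs k (Base a) = False"
| "occurs k (Neg f) = occurs k f"
| "occurs k (Conj f g) = (occurs k f \<or> occurs k g)"
| "occurs k (Box i f) = occurs k f"
| "occurs k (Att i f) = (k = KAtt \<or> occurs k f)"
| "occurs k (Rep i f) = (k = KRep \<or> occurs k f)"
| "occurs k (AttR i f) = (k = KAttR \<or> occurs k f)"
| "occurs k (RepR i f) = (k = KRepR \<or> occurs k f)"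

end

theory Submission
  imports Defs
begin

fun bnd0 :: "'a fm0 \<Rightarrow> nat" where
  "bnd0 (Atom a) = (case a of Prop k \<Rightarrow> Suc k | _ \<Rightarrow> 0)"
| "bnd0 (Neg0 a) = bnd0 a"
| "bnd0 (Conj0 a b) = max (bnd0 a) (bnd0 b)"
| "bnd0 (Bel i a) = 0"

fun bnd :: "'a fm \<Rightarrow> nat" where
  "bnd (Base a) = bnd0 a"
| "bnd (Neg f) = bnd f"
| "bnd (Conj f g) = max (bnd f) (bnd g)"
| "bnd (Box i f) = bnd f"
| "bnd (Att i f) = bnd f"
| "bnd (Rep i f) = bnd f"
| "bnd (AttR i f) = bnd f"
| "bnd (RepR i f) = bnd f"

definition agree :: "nat \<Rightarrow> 'a state \<Rightarrow> 'a state \<Rightarrow> bool" where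
  "agree n X Y = (fst X = fst Y \<and> (\<forall>a. (\<forall>k. a = Prop k \<longrightarrow> k < n) \<longrightarrow> (a \<in> snd X \<longleftrightarrow> a \<in> snd Y)))"

lemma sat0_agree: "agree n X Y \<Longrightarrow> bnd0 \<alpha> \<le> n \<Longrightarrow> sat0 X \<alpha> = sat0 Y \<alpha>"
proof (induction \<alpha>)
  case (Atom a)
  then show ?case by (cases a) (auto simp: agree_def)
qed (auto simp: agree_def)

lemma inv:
  assumes base: "\<And>X Y. Z X Y \<Longrightarrow> agree n X Y"
  and box_f: "\<And>X Y X' j. Z X Y \<Longrightarrow> X' \<in> U1 \<Longrightarrow> relE j X X' \<Longrightarrow> \<exists>Y'\<in>U2. relE j Y Y' \<and> Z X' Y'"
  and box_b: "\<And>X Y Y' j. Z X Y \<Longrightarrow> Y' \<in> U2 \<Longrightarrow> relE j Y Y' \<Longrightarrow> \<exists>X'\<in>U1. relE j X X' \<and> Z X' Y'"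
  and att_f: "\<And>X Y X' j. k \<noteq> KAtt \<Longrightarrow> Z X Y \<Longrightarrow> X' \<in> U1 \<Longrightarrow> \<not> relA j X X' \<Longrightarrow> \<exists>Y'\<in>U2. \<not> relA j Y Y' \<and> Z X' Y'"
  and att_b: "\<And>X Y Y' j. k \<noteq> KAtt \<Longrightarrow> Z X Y \<Longrightarrow> Y' \<in> U2 \<Longrightarrow> \<not> relA j Y Y' \<Longrightarrow> \<exists>X'\<in>U1. \<not> relA j X X' \<and> Z X' Y'"
  and rep_f: "\<And>X Y X' j. k \<noteq> KRep \<Longrightarrow> Z X Y \<Longrightarrow> X' \<in> U1 \<Longrightarrow> \<not> relR j X X' \<Longrightarrow> \<exists>Y'\<in>U2. \<not> relR j Y Y' \<and> Z X' Y'"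
  and rep_b: "\<And>X Y Y' j. k \<noteq> KRep \<Longrightarrow> Z X Y \<Longrightarrow> Y' \<in> U2 \<Longrightarrow> \<not> relR j Y Y' \<Longrightarrow> \<exists>X'\<in>U1. \<not> relR j X X' \<and> Z X' Y'"
  and attr_f: "\<And>X Y X' j. k \<noteq> KAttR \<Longrightarrow> Z X Y \<Longrightarrow> X' \<in> U1 \<Longrightarrow> relE j X X' \<Longrightarrow> \<not> relA j X X' \<Longrightarrow> \<exists>Y'\<in>U2. relE j Y Y' \<and> \<not> relA j Y Y' \<and> Z X' Y'"
  and attr_b: "\<And>X Y Y' j. k \<noteq> KAttR \<Longrightarrow> Z X Y \<Longrightarrow> Y' \<in> U2 \<Longrightarrow> relE j Y Y' \<Longrightarrow> \<not> relA j Y Y' \<Longrightarrow> \<exists>X'\<in>U1. relE j X X' \<and> \<not> relA j X X' \<and> Z X' Y'"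
  and repr_f: "\<And>X Y X' j. k \<noteq> KRepR \<Longrightarrow> Z X Y \<Longrightarrow> X' \<in> U1 \<Longrightarrow> relE j X X' \<Longrightarrow> \<not> relR j X X' \<Longrightarrow> \<exists>Y'\<in>U2. relE j Y Y' \<and> \<not> relR j Y Y' \<and> Z X' Y'"
  and repr_b: "\<And>X Y Y' j. k \<noteq> KRepR \<Longrightarrow> Z X Y \<Longrightarrow> Y' \<in> U2 \<Longrightarrow> relE j Y Y' \<Longrightarrow> \<not> relR j Y Y' \<Longrightarrow> \<exists>X'\<in>U1. relE j X X' \<and> \<not> relR j X X' \<and> Z X' Y'"
  shows "\<not> occurs k \<phi> \<Longrightarrow> bnd \<phi> \<le> n \<Longrightarrow> Z X Y \<Longrightarrow> sat U1 X \<phi> = sat U2 Y \<phi>"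
proof (induction \<phi> arbitrary: X Y)
  case (Base a)
  then show ?case using sat0_agree[OF base[OF Base(3)], of a] Base(2) by simp
next
  case (Neg f) then show ?case by auto
next
  case (Conj f g) then show ?case by auto
next
  case (Box j f)
  have IH: "\<And>X Y. Z X Y \<Longrightarrow> sat U1 X f = sat U2 Y f" using Box by simp
  show ?case
  proof
    assume L: "sat U1 X (Box j f)"
    show "sat U2 Y (Box j f)" unfolding sat.simps
    proof (intro ballI impI)
      fix Y' assume "Y' \<in> U2" "relE j Y Y'"
      then obtain X' where "X' \<in> U1" "relE j X X'" "Z X' Y'" using box_b[OF Box(4)] by blast
      then show "sat U2 Y' f" using L IH[OF \<open>Z X' Y'\<close>] by auto
    qed
  next
    assume L: "sat U2 Y (Box j f)"
    show "sat U1 X (Box j f)" unfolding sat.simps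
    proof (intro ballI impI)
      fix X' assume "X' \<in> U1" "relE j X X'"
      then obtain Y' where "Y' \<in> U2" "relE j Y Y'" "Z X' Y'" using box_f[OF Box(4)] by blast
      then show "sat U1 X' f" using L IH[OF \<open>Z X' Y'\<close>] by auto
    qed
  qed
next
  case (Att j f)
  have IH: "\<And>X Y. Z X Y \<Longrightarrow> sat U1 X f = sat U2 Y f" using Att by simp
  have kk: "k \<noteq> KAtt" using Att by auto
  show ?case
  proof
    assume L: "sat U1 X (Att j f)"
    show "sat U2 Y (Att j f)" unfolding sat.simps
    proof (intro ballI impI)
      fix Y' assume "Y' \<in> U2" "sat U2 Y' f"
      show "relA j Y Y'"
      proof (rule ccontr)
        assume "\<not> relA j Y Y'"
        then obtain X' where "X' \<in> U1" "\<not> relA j X X'" "Z X' Y'" using att_b[OF kk Att(4) \<open>Y' \<in> U2\<close>] by blast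
        then show False using L IH[OF \<open>Z X' Y'\<close>] \<open>sat U2 Y' f\<close> by auto
      qed
    qed
  next
    assume L: "sat U2 Y (Att j f)"
    show "sat U1 X (Att j f)" unfolding sat.simps
    proof (intro ballI impI)
      fix X' assume "X' \<in> U1" "sat U1 X' f"
      show "relA j X X'"
      proof (rule ccontr)
        assume "\<not> relA j X X'"
        then obtain Y' where "Y' \<in> U2" "\<not> relA j Y Y'" "Z X' Y'" using att_f[OF kk Att(4) \<open>X' \<in> U1\<close>] by blast
        then show False using L IH[OF \<open>Z X' Y'\<close>] \<open>sat U1 X' f\<close> by auto
      qed
    qed
  qed
next
  case (Rep j f)
  have IH: "\<And>X Y. Z X Y \<Longrightarrow> sat U1 X f = sat U2 Y f" using Rep by simp
  have kk: "k \<noteq> KRep" using Rep by auto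
  show ?case
  proof
    assume L: "sat U1 X (Rep j f)"
    show "sat U2 Y (Rep j f)" unfolding sat.simps
    proof (intro ballI impI)
      fix Y' assume "Y' \<in> U2" "sat U2 Y' f"
      show "relR j Y Y'"
      proof (rule ccontr)
        assume "\<not> relR j Y Y'"
        then obtain X' where "X' \<in> U1" "\<not> relR j X X'" "Z X' Y'" using rep_b[OF kk Rep(4) \<open>Y' \<in> U2\<close>] by blast
        then show False using L IH[OF \<open>Z X' Y'\<close>] \<open>sat U2 Y' f\<close> by auto
      qed
    qed
  next
    assume L: "sat U2 Y (Rep j f)"
    show "sat U1 X (Rep j f)" unfolding sat.simps
    proof (intro ballI impI)
      fix X' assume "X' \<in> U1" "sat U1 X' f"
      show "relR j X X'"
      proof (rule ccontr)
        assume "\<not> relR j X X'"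
        then obtain Y' where "Y' \<in> U2" "\<not> relR j Y Y'" "Z X' Y'" using rep_f[OF kk Rep(4) \<open>X' \<in> U1\<close>] by blast
        then show False using L IH[OF \<open>Z X' Y'\<close>] \<open>sat U1 X' f\<close> by auto
      qed
    qed
  qed
next
  case (AttR j f)
  have IH: "\<And>X Y. Z X Y \<Longrightarrow> sat U1 X f = sat U2 Y f" using AttR by simp
  have kk: "k \<noteq> KAttR" using AttR by auto
  show ?case
  proof
    assume L: "sat U1 X (AttR j f)"
    show "sat U2 Y (AttR j f)" unfolding sat.simps
    proof (intro ballI impI)
      fix Y' assume "Y' \<in> U2" "sat U2 Y' f \<and> relE j Y Y'"
      show "relA j Y Y'"
      proof (rule ccontr)
        assume "\<not> relA j Y Y'"
        then obtain X' where "X' \<in> U1" "relE j X X'" "\<not> relA j X X'" "Z X' Y'" using attr_b[OF kk AttR(4) \<open>Y' \<in> U2\<close>] \<open>sat U2 Y' f \<and> relE j Y Y'\<close> by blast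
        then show False using L IH[OF \<open>Z X' Y'\<close>] \<open>sat U2 Y' f \<and> relE j Y Y'\<close> by auto
      qed
    qed
  next
    assume L: "sat U2 Y (AttR j f)"
    show "sat U1 X (AttR j f)" unfolding sat.simps
    proof (intro ballI impI)
      fix X' assume "X' \<in> U1" "sat U1 X' f \<and> relE j X X'"
      show "relA j X X'"
      proof (rule ccontr)
        assume "\<not> relA j X X'"
        then obtain Y' where "Y' \<in> U2" "relE j Y Y'" "\<not> relA j Y Y'" "Z X' Y'" using attr_f[OF kk AttR(4) \<open>X' \<in> U1\<close>] \<open>sat U1 X' f \<and> relE j X X'\<close> by blast
        then show False using L IH[OF \<open>Z X' Y'\<close>] \<open>sat U1 X' f \<and> relE j X X'\<close> by auto
      qed
    qed
  qed
next
  case (RepR j f)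
  have IH: "\<And>X Y. Z X Y \<Longrightarrow> sat U1 X f = sat U2 Y f" using RepR by simp
  have kk: "k \<noteq> KRepR" using RepR by auto
  show ?case
  proof
    assume L: "sat U1 X (RepR j f)"
    show "sat U2 Y (RepR j f)" unfolding sat.simps
    proof (intro ballI impI)
      fix Y' assume "Y' \<in> U2" "sat U2 Y' f \<and> relE j Y Y'"
      show "relR j Y Y'"
      proof (rule ccontr)
        assume "\<not> relR j Y Y'"
        then obtain X' where "X' \<in> U1" "relE j X X'" "\<not> relR j X X'" "Z X' Y'" using repr_b[OF kk RepR(4) \<open>Y' \<in> U2\<close>] \<open>sat U2 Y' f \<and> relE j Y Y'\<close> by blast
        then show False using L IH[OF \<open>Z X' Y'\<close>] \<open>sat U2 Y' f \<and> relE j Y Y'\<close> by auto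
      qed
    qed
  next
    assume L: "sat U2 Y (RepR j f)"
    show "sat U1 X (RepR j f)" unfolding sat.simps
    proof (intro ballI impI)
      fix X' assume "X' \<in> U1" "sat U1 X' f \<and> relE j X X'"
      show "relR j X X'"
      proof (rule ccontr)
        assume "\<not> relR j X X'"
        then obtain Y' where "Y' \<in> U2" "relE j Y Y'" "\<not> relR j Y Y'" "Z X' Y'" using repr_f[OF kk RepR(4) \<open>X' \<in> U1\<close>] \<open>sat U1 X' f \<and> relE j X X'\<close> by blast
        then show False using L IH[OF \<open>Z X' Y'\<close>] \<open>sat U1 X' f \<and> relE j X X'\<close> by auto
      qed
    qed
  qed
qed


definition BB :: "('a \<Rightarrow> 'a atm) \<Rightarrow> 'a \<Rightarrow> 'a fm0 set" where
  "BB c j = range (\<lambda>m. Neg0 (Atom (Prop (2*m+1)))) \<union> range (\<lambda>m. Imp0 (Atom (Prop (2*m+2))) (Atom (c j)))"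

definition st :: "('a \<Rightarrow> 'a atm) \<Rightarrow> nat set \<Rightarrow> 'a state" where
  "st c W = (BB c, range c \<union> Prop ` W)"

definition ee :: "nat set \<Rightarrow> bool" where "ee W = (\<forall>m. 2*m+1 \<notin> W)"
definition aa :: "nat set \<Rightarrow> bool" where "aa W = (\<exists>m. 2*m+2 \<in> W)"
definition agr :: "nat \<Rightarrow> nat set \<Rightarrow> nat set \<Rightarrow> bool" where "agr n W W' = (\<forall>k<n. k \<in> W \<longleftrightarrow> k \<in> W')"

lemma Rew_Pun: "Rew \<noteq> (Pun :: 'a \<Rightarrow> 'a atm)"
proof
  assume "Rew = (Pun :: 'a \<Rightarrow> 'a atm)"
  then have "Rew undefined = (Pun undefined :: 'a atm)" by simp
  then show False by simp
qed

lemma relE_st: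
  assumes "c = Rew \<or> c = Pun"
  shows "relE j (st c W) (st c W') = ee W'"
proof
  assume H: "relE j (st c W) (st c W')"
  show "ee W'" unfolding ee_def
  proof
    fix m
    have "Neg0 (Atom (Prop (2*m+1))) \<in> fst (st c W) j" by (simp add: st_def BB_def)
    then have "sat0 (st c W') (Neg0 (Atom (Prop (2*m+1))))" using H unfolding relE_def by blast
    then show "2*m+1 \<notin> W'" using assms by (auto simp: st_def)
  qed
next
  assume "ee W'"
  then show "relE j (st c W) (st c W')"
    using assms by (auto simp: relE_def st_def BB_def ee_def Imp0_def)
qed

lemma Des_st:
  assumes "c = Rew \<or> c = Pun"
  shows "Des j (st c W) = (if c = Rew then range (\<lambda>m. Atom (Prop (2*m+2))) else {})"
  using assms Rew_Pun by (auto simp: Des_def st_def BB_def Imp0_def)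

lemma Und_st:
  assumes "c = Rew \<or> c = Pun"
  shows "Und j (st c W) = (if c = Pun then range (\<lambda>m. Atom (Prop (2*m+2))) else {})"
  using assms Rew_Pun by (auto simp: Und_def st_def BB_def Imp0_def)

lemma relA_st:
  assumes "c = Rew \<or> c = Pun"
  shows "relA j (st c W) (st c W') = (c = Rew \<and> aa W')"
  using assms Rew_Pun unfolding relA_def Des_st[OF assms] by (auto simp: st_def aa_def)

lemma relR_st:
  assumes "c = Rew \<or> c = Pun"
  shows "relR j (st c W) (st c W') = (c = Pun \<and> aa W')"
  using assms Rew_Pun unfolding relR_def Und_st[OF assms] by (auto simp: st_def aa_def)

lemma agree_st:
  assumes "c = Rew \<or> c = Pun" "agr n W W'"
  shows "agree n (st c W) (st c W')"
  using assms unfolding agree_def agr_def st_def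
  by auto

lemma agr_refl: "agr n W W" by (simp add: agr_def)

lemma model:
  assumes c: "(c = Rew \<and> ka = KAtt \<and> kr = KAttR) \<or> (c = Pun \<and> ka = KRep \<and> kr = KRepR)"
  and sub: "V1 \<subseteq> V2"
  and tot: "\<And>W' n. W' \<in> V2 \<Longrightarrow> \<exists>W\<in>V1. agr n W W'"
  and em: "\<And>W' n. W' \<in> V2 \<Longrightarrow> ee W' \<Longrightarrow> \<exists>W\<in>V1. agr n W W' \<and> ee W"
  and am: "\<And>W' n. W' \<in> V2 \<Longrightarrow> k \<noteq> ka \<Longrightarrow> \<not> aa W' \<Longrightarrow> \<exists>W\<in>V1. agr n W W' \<and> \<not> aa W"
  and eam: "\<And>W' n. W' \<in> V2 \<Longrightarrow> k \<noteq> kr \<Longrightarrow> ee W' \<Longrightarrow> \<not> aa W' \<Longrightarrow> \<exists>W\<in>V1. agr n W W' \<and> ee W \<and> \<not> aa W"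
  and nk: "\<not> occurs k \<phi>" and W: "W \<in> V1"
  shows "sat (st c ` V1) (st c W) \<phi> = sat (st c ` V2) (st c W) \<phi>"
proof -
  have cc: "c = Rew \<or> c = Pun" using c by auto
  define n where "n = bnd \<phi>"
  define Z where "Z = (\<lambda>X Y. \<exists>W\<in>V1. \<exists>W'\<in>V2. X = st c W \<and> Y = st c W' \<and> agr n W W')"
  have hA: "\<exists>W\<in>V1. agr n W W2 \<and> \<not>(c = Rew \<and> aa W)"
    if "k \<noteq> KAtt" "W2 \<in> V2" "\<not>(c = Rew \<and> aa W2)" for W2
    using c that am[of W2 n] tot[of W2 n] Rew_Pun Rew_Pun[symmetric] by auto
  have hR: "\<exists>W\<in>V1. agr n W W2 \<and> \<not>(c = Pun \<and> aa W)"
    if "k \<noteq> KRep" "W2 \<in> V2" "\<not>(c = Pun \<and> aa W2)" for W2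
    using c that am[of W2 n] tot[of W2 n] Rew_Pun Rew_Pun[symmetric] by auto
  have hAR: "\<exists>W\<in>V1. agr n W W2 \<and> ee W \<and> \<not>(c = Rew \<and> aa W)"
    if "k \<noteq> KAttR" "W2 \<in> V2" "ee W2" "\<not>(c = Rew \<and> aa W2)" for W2
    using c that eam[of W2 n] em[of W2 n] Rew_Pun Rew_Pun[symmetric] by auto
  have hRR: "\<exists>W\<in>V1. agr n W W2 \<and> ee W \<and> \<not>(c = Pun \<and> aa W)"
    if "k \<noteq> KRepR" "W2 \<in> V2" "ee W2" "\<not>(c = Pun \<and> aa W2)" for W2
    using c that eam[of W2 n] em[of W2 n] Rew_Pun Rew_Pun[symmetric] by auto
  have hE: "\<exists>W\<in>V1. agr n W W2 \<and> ee W" if "W2 \<in> V2" "ee W2" for W2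
    using em that by blast
  note rels = relE_st[OF cc] relA_st[OF cc] relR_st[OF cc]
  show ?thesis
  proof (rule inv[where Z=Z and n=n and k=k])
    show "\<And>X Y. Z X Y \<Longrightarrow> agree n X Y" unfolding Z_def using agree_st[OF cc] by blast
    show "\<And>X Y X' j. Z X Y \<Longrightarrow> X' \<in> st c ` V1 \<Longrightarrow> relE j X X' \<Longrightarrow> \<exists>Y'\<in>st c ` V2. relE j Y Y' \<and> Z X' Y'"
    proof -
      fix X Y X' j assume "Z X Y" and H: "X' \<in> st c ` V1" "relE j X X'"
      then obtain W0 W1 W2 where "X = st c W0" "Y = st c W1" "X' = st c W2" "W2 \<in> V1"
        unfolding Z_def by blast
      then show "\<exists>Y'\<in>st c ` V2. relE j Y Y' \<and> Z X' Y'"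
        using H subsetD[OF sub \<open>W2 \<in> V1\<close>] agr_refl[of n W2] unfolding Z_def
        by (intro bexI[of _ X']) (auto simp: rels)
    qed
    show "\<And>X Y Y' j. Z X Y \<Longrightarrow> Y' \<in> st c ` V2 \<Longrightarrow> relE j Y Y' \<Longrightarrow> \<exists>X'\<in>st c ` V1. relE j X X' \<and> Z X' Y'"
    proof -
      fix X Y Y' j assume "Z X Y" and H: "Y' \<in> st c ` V2" "relE j Y Y'"
      then obtain W0 W1 W2 where e: "X = st c W0" "Y = st c W1" "Y' = st c W2" "W2 \<in> V2"
        unfolding Z_def by blast
      with H have P: "ee W2" by (simp_all add: rels)
      obtain W where W: "W \<in> V1" "agr n W W2" "ee W"
        using hE[OF \<open>W2 \<in> V2\<close> P] by blast
      then show "\<exists>X'\<in>st c ` V1. relE j X X' \<and> Z X' Y'"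
        using e \<open>Z X Y\<close> unfolding Z_def
        by (intro bexI[of _ "st c W"]) (auto simp: rels)
    qed
    show "\<And>X Y X' j. k \<noteq> KAtt \<Longrightarrow> Z X Y \<Longrightarrow> X' \<in> st c ` V1 \<Longrightarrow> \<not> relA j X X' \<Longrightarrow> \<exists>Y'\<in>st c ` V2. \<not> relA j Y Y' \<and> Z X' Y'"
    proof -
      fix X Y X' j assume kk: "k \<noteq> KAtt" and "Z X Y" and H: "X' \<in> st c ` V1" "\<not> relA j X X'"
      then obtain W0 W1 W2 where "X = st c W0" "Y = st c W1" "X' = st c W2" "W2 \<in> V1"
        unfolding Z_def by blast
      then show "\<exists>Y'\<in>st c ` V2. \<not> relA j Y Y' \<and> Z X' Y'"
        using H subsetD[OF sub \<open>W2 \<in> V1\<close>] agr_refl[of n W2] unfolding Z_def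
        by (intro bexI[of _ X']) (auto simp: rels)
    qed
    show "\<And>X Y Y' j. k \<noteq> KAtt \<Longrightarrow> Z X Y \<Longrightarrow> Y' \<in> st c ` V2 \<Longrightarrow> \<not> relA j Y Y' \<Longrightarrow> \<exists>X'\<in>st c ` V1. \<not> relA j X X' \<and> Z X' Y'"
    proof -
      fix X Y Y' j assume kk: "k \<noteq> KAtt" and "Z X Y" and H: "Y' \<in> st c ` V2" "\<not> relA j Y Y'"
      then obtain W0 W1 W2 where e: "X = st c W0" "Y = st c W1" "Y' = st c W2" "W2 \<in> V2"
        unfolding Z_def by blast
      with H have P: "\<not>(c = Rew \<and> aa W2)" by (simp_all add: rels)
      obtain W where W: "W \<in> V1" "agr n W W2" "\<not>(c = Rew \<and> aa W)"
        using hA[OF kk \<open>W2 \<in> V2\<close> P] by blast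
      then show "\<exists>X'\<in>st c ` V1. \<not> relA j X X' \<and> Z X' Y'"
        using e \<open>Z X Y\<close> unfolding Z_def
        by (intro bexI[of _ "st c W"]) (auto simp: rels)
    qed
    show "\<And>X Y X' j. k \<noteq> KRep \<Longrightarrow> Z X Y \<Longrightarrow> X' \<in> st c ` V1 \<Longrightarrow> \<not> relR j X X' \<Longrightarrow> \<exists>Y'\<in>st c ` V2. \<not> relR j Y Y' \<and> Z X' Y'"
    proof -
      fix X Y X' j assume kk: "k \<noteq> KRep" and "Z X Y" and H: "X' \<in> st c ` V1" "\<not> relR j X X'"
      then obtain W0 W1 W2 where "X = st c W0" "Y = st c W1" "X' = st c W2" "W2 \<in> V1"
        unfolding Z_def by blast
      then show "\<exists>Y'\<in>st c ` V2. \<not> relR j Y Y' \<and> Z X' Y'"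
        using H subsetD[OF sub \<open>W2 \<in> V1\<close>] agr_refl[of n W2] unfolding Z_def
        by (intro bexI[of _ X']) (auto simp: rels)
    qed
    show "\<And>X Y Y' j. k \<noteq> KRep \<Longrightarrow> Z X Y \<Longrightarrow> Y' \<in> st c ` V2 \<Longrightarrow> \<not> relR j Y Y' \<Longrightarrow> \<exists>X'\<in>st c ` V1. \<not> relR j X X' \<and> Z X' Y'"
    proof -
      fix X Y Y' j assume kk: "k \<noteq> KRep" and "Z X Y" and H: "Y' \<in> st c ` V2" "\<not> relR j Y Y'"
      then obtain W0 W1 W2 where e: "X = st c W0" "Y = st c W1" "Y' = st c W2" "W2 \<in> V2"
        unfolding Z_def by blast
      with H have P: "\<not>(c = Pun \<and> aa W2)" by (simp_all add: rels)
      obtain W where W: "W \<in> V1" "agr n W W2" "\<not>(c = Pun \<and> aa W)"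
        using hR[OF kk \<open>W2 \<in> V2\<close> P] by blast
      then show "\<exists>X'\<in>st c ` V1. \<not> relR j X X' \<and> Z X' Y'"
        using e \<open>Z X Y\<close> unfolding Z_def
        by (intro bexI[of _ "st c W"]) (auto simp: rels)
    qed
    show "\<And>X Y X' j. k \<noteq> KAttR \<Longrightarrow> Z X Y \<Longrightarrow> X' \<in> st c ` V1 \<Longrightarrow> relE j X X' \<Longrightarrow> \<not> relA j X X' \<Longrightarrow> \<exists>Y'\<in>st c ` V2. relE j Y Y' \<and> \<not> relA j Y Y' \<and> Z X' Y'"
    proof -
      fix X Y X' j assume kk: "k \<noteq> KAttR" and "Z X Y" and H: "X' \<in> st c ` V1" "relE j X X'" "\<not> relA j X X'"
      then obtain W0 W1 W2 where "X = st c W0" "Y = st c W1" "X' = st c W2" "W2 \<in> V1"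
        unfolding Z_def by blast
      then show "\<exists>Y'\<in>st c ` V2. relE j Y Y' \<and> \<not> relA j Y Y' \<and> Z X' Y'"
        using H subsetD[OF sub \<open>W2 \<in> V1\<close>] agr_refl[of n W2] unfolding Z_def
        by (intro bexI[of _ X']) (auto simp: rels)
    qed
    show "\<And>X Y Y' j. k \<noteq> KAttR \<Longrightarrow> Z X Y \<Longrightarrow> Y' \<in> st c ` V2 \<Longrightarrow> relE j Y Y' \<Longrightarrow> \<not> relA j Y Y' \<Longrightarrow> \<exists>X'\<in>st c ` V1. relE j X X' \<and> \<not> relA j X X' \<and> Z X' Y'"
    proof -
      fix X Y Y' j assume kk: "k \<noteq> KAttR" and "Z X Y" and H: "Y' \<in> st c ` V2" "relE j Y Y'" "\<not> relA j Y Y'"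
      then obtain W0 W1 W2 where e: "X = st c W0" "Y = st c W1" "Y' = st c W2" "W2 \<in> V2"
        unfolding Z_def by blast
      with H have P: "ee W2" "\<not>(c = Rew \<and> aa W2)" by (simp_all add: rels)
      obtain W where W: "W \<in> V1" "agr n W W2" "ee W" "\<not>(c = Rew \<and> aa W)"
        using hAR[OF kk \<open>W2 \<in> V2\<close> P] by blast
      then show "\<exists>X'\<in>st c ` V1. relE j X X' \<and> \<not> relA j X X' \<and> Z X' Y'"
        using e \<open>Z X Y\<close> unfolding Z_def
        by (intro bexI[of _ "st c W"]) (auto simp: rels)
    qed
    show "\<And>X Y X' j. k \<noteq> KRepR \<Longrightarrow> Z X Y \<Longrightarrow> X' \<in> st c ` V1 \<Longrightarrow> relE j X X' \<Longrightarrow> \<not> relR j X X' \<Longrightarrow> \<exists>Y'\<in>st c ` V2. relE j Y Y' \<and> \<not> relR j Y Y' \<and> Z X' Y'"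
    proof -
      fix X Y X' j assume kk: "k \<noteq> KRepR" and "Z X Y" and H: "X' \<in> st c ` V1" "relE j X X'" "\<not> relR j X X'"
      then obtain W0 W1 W2 where "X = st c W0" "Y = st c W1" "X' = st c W2" "W2 \<in> V1"
        unfolding Z_def by blast
      then show "\<exists>Y'\<in>st c ` V2. relE j Y Y' \<and> \<not> relR j Y Y' \<and> Z X' Y'"
        using H subsetD[OF sub \<open>W2 \<in> V1\<close>] agr_refl[of n W2] unfolding Z_def
        by (intro bexI[of _ X']) (auto simp: rels)
    qed
    show "\<And>X Y Y' j. k \<noteq> KRepR \<Longrightarrow> Z X Y \<Longrightarrow> Y' \<in> st c ` V2 \<Longrightarrow> relE j Y Y' \<Longrightarrow> \<not> relR j Y Y' \<Longrightarrow> \<exists>X'\<in>st c ` V1. relE j X X' \<and> \<not> relR j X X' \<and> Z X' Y'"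
    proof -
      fix X Y Y' j assume kk: "k \<noteq> KRepR" and "Z X Y" and H: "Y' \<in> st c ` V2" "relE j Y Y'" "\<not> relR j Y Y'"
      then obtain W0 W1 W2 where e: "X = st c W0" "Y = st c W1" "Y' = st c W2" "W2 \<in> V2"
        unfolding Z_def by blast
      with H have P: "ee W2" "\<not>(c = Pun \<and> aa W2)" by (simp_all add: rels)
      obtain W where W: "W \<in> V1" "agr n W W2" "ee W" "\<not>(c = Pun \<and> aa W)"
        using hRR[OF kk \<open>W2 \<in> V2\<close> P] by blast
      then show "\<exists>X'\<in>st c ` V1. relE j X X' \<and> \<not> relR j X X' \<and> Z X' Y'"
        using e \<open>Z X Y\<close> unfolding Z_def
        by (intro bexI[of _ "st c W"]) (auto simp: rels)
    qed
    show "\<not> occurs k \<phi>" by (rule nk)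
    show "bnd \<phi> \<le> n" by (simp add: n_def)
    show "Z (st c W) (st c W)" unfolding Z_def using W sub agr_refl by blast
  qed
qed

lemma sat0_st: "c = Rew \<or> c = Pun \<Longrightarrow> sat0 (st c W) (Atom (Prop k)) = (k \<in> W)"
  by (auto simp: st_def)

lemma Prop_st: "c = Rew \<or> c = Pun \<Longrightarrow> (Prop k \<in> snd (st c W)) = (k \<in> W)"
  by (auto simp: st_def)

lemmas st_simps = relE_st[of Rew, simplified] relA_st[of Rew, simplified] relR_st[of Rew, simplified]
  relE_st[of Pun, simplified] relA_st[of Pun, simplified] relR_st[of Pun, simplified]
  Prop_st[of Rew, simplified] Prop_st[of Pun, simplified] Rew_Pun Rew_Pun[symmetric]

lemma sat_op_real:
  assumes c: "(c = Rew \<and> ka = KAtt \<and> kr = KAttR) \<or> (c = Pun \<and> ka = KRep \<and> kr = KRepR)"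
  shows "sat (st c ` V) (st c W0) (mk_op kr i (Base (Atom (Prop 0)))) = (\<forall>W\<in>V. 0 \<in> W \<and> ee W \<longrightarrow> aa W)"
  using c
proof (elim disjE conjE)
  assume "c = Rew" "kr = KAttR"
  then show ?thesis by (simp add: st_simps)
next
  assume "c = Pun" "kr = KRepR"
  then show ?thesis by (simp add: st_simps)
qed

lemma sat_op_plain:
  assumes c: "(c = Rew \<and> ka = KAtt \<and> kr = KAttR) \<or> (c = Pun \<and> ka = KRep \<and> kr = KRepR)"
  shows "sat (st c ` V) (st c W0) (mk_op ka i (Base (Atom (Prop 0)))) = (\<forall>W\<in>V. 0 \<in> W \<longrightarrow> aa W)"
  using c
proof (elim disjE conjE)
  assume "c = Rew" "ka = KAtt"
  then show ?thesis by (simp add: st_simps)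
next
  assume "c = Pun" "ka = KRep"
  then show ?thesis by (simp add: st_simps)
qed

lemma ext_cond:
  assumes "W' \<in> insert T VV" "P W'" "P T \<Longrightarrow> \<exists>W\<in>VV. agr n W T \<and> P W"
  shows "\<exists>W\<in>VV. agr n W W' \<and> P W"
proof (cases "W' \<in> VV")
  case True
  then show ?thesis using assms(2) agr_refl[of n W'] by blast
next
  case False
  then have "W' = T" using assms(1) by blast
  then show ?thesis using assms(2,3) by blast
qed

lemma sat_Iff: "sat U S (Iff a b) = (sat U S a = sat U S b)"
  unfolding Iff_def Imp_def by auto

lemma final:
  assumes eq: "\<And>\<phi>. \<not> occurs k \<phi> \<Longrightarrow> sat U1 S \<phi> = sat U2 S \<phi>"
  and S: "S \<in> U1" "S \<in> U2"
  and d: "sat U1 S Op \<noteq> sat U2 S Op"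
  shows "\<forall>\<phi>. \<not> occurs k \<phi> \<longrightarrow> \<not> valid (Iff Op \<phi>)"
proof (intro allI impI notI)
  fix \<phi> assume nk: "\<not> occurs k \<phi>" and v: "valid (Iff Op \<phi>)"
  have i1: "sat U1 S (Iff Op \<phi>)" using v S(1) unfolding valid_def by blast
  have i2: "sat U2 S (Iff Op \<phi>)" using v S(2) unfolding valid_def by blast
  have "sat U1 S Op = sat U1 S \<phi>" using i1 by (simp only: sat_Iff)
  moreover have "sat U2 S Op = sat U2 S \<phi>" using i2 by (simp only: sat_Iff)
  moreover have "sat U1 S \<phi> = sat U2 S \<phi>" by (rule eq[OF nk])
  ultimately show False using d by simp
qed

lemma inst_real:
  fixes c :: "'a \<Rightarrow> 'a atm" and i :: 'a
  assumes c: "(c = Rew \<and> ka = KAtt \<and> kr = KAttR) \<or> (c = Pun \<and> ka = KRep \<and> kr = KRepR)"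
  shows "\<forall>\<phi>. \<not> occurs kr \<phi> \<longrightarrow> \<not> valid (Iff (mk_op kr i (Base (Atom (Prop 0)))) \<phi>)"
proof -
  define V1 :: "nat set set" where "V1 = insert {} (range (\<lambda>m. {0, 2*m+2}) \<union> range (\<lambda>m. {0, 2*m+1}))"
  define V2 where "V2 = insert {0} V1"
  have w1: "{0, 2*n+2} \<in> V1" for n unfolding V1_def by blast
  have w2: "{0, 2*n+1} \<in> V1" for n unfolding V1_def by blast
  have a1: "agr n {0, 2*n+2} {0}" for n by (auto simp: agr_def)
  have a2: "agr n {0, 2*n+1} {0}" for n by (auto simp: agr_def)
  have p1a: "ee {0, 2*n+2}" for n unfolding ee_def by auto presburger
  have p1b: "\<not> aa {0, 2*n+1}" for n unfolding aa_def by auto presburger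
  have eq: "sat (st c ` V1) (st c {}) \<phi> = sat (st c ` V2) (st c {}) \<phi>" if nk: "\<not> occurs kr \<phi>" for \<phi>
  proof (rule model[where ka=ka and kr=kr and k=kr, OF c])
    show "V1 \<subseteq> V2" unfolding V2_def by blast
    show "\<exists>W\<in>V1. agr n W W'" if "W' \<in> V2" for W' n
      using ext_cond[where W'=W' and T="{0}" and VV=V1 and P="\<lambda>_. True" and n=n] that w1[of n] a1[of n]
      unfolding V2_def by blast
    show "\<exists>W\<in>V1. agr n W W' \<and> ee W" if "W' \<in> V2" "ee W'" for W' n
      using ext_cond[where W'=W' and T="{0}" and VV=V1 and P="ee" and n=n] that w1[of n] a1[of n] p1a[of n]
      unfolding V2_def by blast
    show "\<exists>W\<in>V1. agr n W W' \<and> \<not> aa W" if "W' \<in> V2" "kr \<noteq> ka" "\<not> aa W'" for W' n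
      using ext_cond[where W'=W' and T="{0}" and VV=V1 and P="\<lambda>W. \<not> aa W" and n=n] that w2[of n] a2[of n] p1b[of n]
      unfolding V2_def by blast
    show "\<exists>W\<in>V1. agr n W W' \<and> ee W \<and> \<not> aa W" if "W' \<in> V2" "kr \<noteq> kr" "ee W'" "\<not> aa W'" for W' n
      using that by blast
    show "\<not> occurs kr \<phi>" by (rule nk)
    show "{} \<in> V1" unfolding V1_def by blast
  qed
  have t1: "\<forall>W\<in>V1. 0 \<in> W \<and> ee W \<longrightarrow> aa W"
  proof
    fix W assume "W \<in> V1"
    then consider "W = {}" | m where "W = {0, 2*m+2}" | m where "W = {0, 2*m+1}"
      unfolding V1_def by blast
    then show "0 \<in> W \<and> ee W \<longrightarrow> aa W"
    proof cases
      case 1 then show ?thesis by simp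
    next
      case (2 m) then show ?thesis unfolding aa_def by blast
    next
      case (3 m) then show ?thesis unfolding ee_def by blast
    qed
  qed
  have t2: "\<not> (\<forall>W\<in>V2. 0 \<in> W \<and> ee W \<longrightarrow> aa W)"
  proof -
    have "{0} \<in> V2" unfolding V2_def by blast
    moreover have "ee {0}" unfolding ee_def by simp
    moreover have "\<not> aa {0}" unfolding aa_def by simp
    ultimately show ?thesis by blast
  qed
  show ?thesis
  proof (rule final[OF eq])
    show "st c {} \<in> st c ` V1" unfolding V1_def by blast
    show "st c {} \<in> st c ` V2" unfolding V2_def V1_def by blast
    show "sat (st c ` V1) (st c {}) (mk_op kr i (Base (Atom (Prop 0)))) \<noteq>
      sat (st c ` V2) (st c {}) (mk_op kr i (Base (Atom (Prop 0))))"
      unfolding sat_op_real[OF c] using t1 t2 by blast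
  qed
qed

lemma inst_plain:
  fixes c :: "'a \<Rightarrow> 'a atm" and i :: 'a
  assumes c: "(c = Rew \<and> ka = KAtt \<and> kr = KAttR) \<or> (c = Pun \<and> ka = KRep \<and> kr = KRepR)"
  shows "\<forall>\<phi>. \<not> occurs ka \<phi> \<longrightarrow> \<not> valid (Iff (mk_op ka i (Base (Atom (Prop 0)))) \<phi>)"
proof -
  define V1 :: "nat set set" where "V1 = insert {} (range (\<lambda>m. {0, 1, 2*m+2}))"
  define V2 where "V2 = insert {0, 1} V1"
  have w1: "{0, 1, 2*n+2} \<in> V1" for n unfolding V1_def by blast
  have a1: "agr n {0, 1, 2*n+2} {0, 1}" for n by (auto simp: agr_def)
  have ne: "\<not> ee {0, 1}" unfolding ee_def by (metis insertI1 insertI2 mult_0_right add_0 Suc_eq_plus1 One_nat_def singletonI)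
  have eq: "sat (st c ` V1) (st c {}) \<phi> = sat (st c ` V2) (st c {}) \<phi>" if nk: "\<not> occurs ka \<phi>" for \<phi>
  proof (rule model[where ka=ka and kr=kr and k=ka, OF c])
    show "V1 \<subseteq> V2" unfolding V2_def by blast
    show "\<exists>W\<in>V1. agr n W W'" if "W' \<in> V2" for W' n
      using ext_cond[where W'=W' and T="{0, 1}" and VV=V1 and P="\<lambda>_. True" and n=n] that w1[of n] a1[of n]
      unfolding V2_def by blast
    show "\<exists>W\<in>V1. agr n W W' \<and> ee W" if "W' \<in> V2" "ee W'" for W' n
      using ext_cond[where W'=W' and T="{0, 1}" and VV=V1 and P="ee" and n=n] that ne
      unfolding V2_def by blast
    show "\<exists>W\<in>V1. agr n W W' \<and> \<not> aa W" if "W' \<in> V2" "ka \<noteq> ka" "\<not> aa W'" for W' n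
      using that by blast
    show "\<exists>W\<in>V1. agr n W W' \<and> ee W \<and> \<not> aa W" if "W' \<in> V2" "ka \<noteq> kr" "ee W'" "\<not> aa W'" for W' n
      using ext_cond[where W'=W' and T="{0, 1}" and VV=V1 and P="\<lambda>W. ee W \<and> \<not> aa W" and n=n] that ne
      unfolding V2_def by blast
    show "\<not> occurs ka \<phi>" by (rule nk)
    show "{} \<in> V1" unfolding V1_def by blast
  qed
  have t1: "\<forall>W\<in>V1. 0 \<in> W \<longrightarrow> aa W"
  proof
    fix W assume "W \<in> V1"
    then consider "W = {}" | m where "W = {0, 1, 2*m+2}"
      unfolding V1_def by blast
    then show "0 \<in> W \<longrightarrow> aa W"
    proof cases
      case 1 then show ?thesis by simp
    next
      case (2 m) then show ?thesis unfolding aa_def by blast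
    qed
  qed
  have t2: "\<not> (\<forall>W\<in>V2. 0 \<in> W \<longrightarrow> aa W)"
  proof -
    have "{0, 1} \<in> V2" unfolding V2_def by blast
    moreover have "\<not> aa {0, 1}" unfolding aa_def by simp
    ultimately show ?thesis by blast
  qed
  show ?thesis
  proof (rule final[OF eq])
    show "st c {} \<in> st c ` V1" unfolding V1_def by blast
    show "st c {} \<in> st c ` V2" unfolding V2_def V1_def by blast
    show "sat (st c ` V1) (st c {}) (mk_op ka i (Base (Atom (Prop 0)))) \<noteq>
      sat (st c ` V2) (st c {}) (mk_op ka i (Base (Atom (Prop 0))))"
      unfolding sat_op_plain[OF c] using t1 t2 by blast
  qed
qed

theorem theorem1:
  fixes i :: "'a :: finite"
  shows "\<forall>k. \<exists>p :: 'a atm. \<forall>\<phi> :: 'a fm.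
           \<not> occurs k \<phi> \<longrightarrow> \<not> valid (Iff (mk_op k i (Base (Atom p))) \<phi>)"
proof
  fix k
  show "\<exists>p :: 'a atm. \<forall>\<phi> :: 'a fm. \<not> occurs k \<phi> \<longrightarrow> \<not> valid (Iff (mk_op k i (Base (Atom p))) \<phi>)"
  proof (cases k)
    case KAtt then show ?thesis using inst_plain[of Rew KAtt KAttR i] by blast
  next
    case KRep then show ?thesis using inst_plain[of Pun KRep KRepR i] by blast
  next
    case KAttR then show ?thesis using inst_real[of Rew KAtt KAttR i] by blast
  next
    case KRepR then show ?thesis using inst_real[of Pun KRep KRepR i] by blast
  qed
qed

end
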